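(* Let $W,W_1,W_2,\dots$ be random variables with finite $p$th absolute moments, where $1\le p<\infty$. Suppose that $W$ has an absolutely continuous distribution and that, for each $n\ge1$, there is a real constant $b_n$ such that $n(W_n-b_n)$ is integer-valued. Then $$\liminf_{n\to\infty} n\,d_p(W_n,W)\ge \frac12 (p+1)^{-1/p}.$$ In particular, $d_p(W_n,W)=\Omega(1/n)$.
   Context: For $1\le p<\infty$, $d_p(X,Y):=\min\|X'-Y'\|_p$, the minimum taken over all couplings $(X',Y')$ on a common probability space with $X'\stackrel{d}{=}X$ and $Y'\stackrel{d}{=}Y$. *)

theory Defs
  imports "HOL-Probability.Probability"
begin

text \<open>Distributions on the real line: library locale real_distribution
  (probability measures on the Borel sets).\<close>

definition coupling :: "(real \<times> real) measure \<Rightarrow> real measure \<Rightarrow> real measure \<Rightarrow> bool" where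
  "coupling \<gamma> \<mu> \<nu> \<longleftrightarrow> prob_space \<gamma> \<and> sets \<gamma> = sets (borel \<Otimes>\<^sub>M borel)
     \<and> distr \<gamma> borel fst = \<mu> \<and> distr \<gamma> borel snd = \<nu>"

definition wasserstein :: "real \<Rightarrow> real measure \<Rightarrow> real measure \<Rightarrow> real" where
  "wasserstein p \<mu> \<nu> = Inf {(\<integral>z. \<bar>fst z - snd z\<bar> powr p \<partial>\<gamma>) powr (1 / p) | \<gamma>.
       coupling \<gamma> \<mu> \<nu> \<and> integrable \<gamma> (\<lambda>z. \<bar>fst z - snd z\<bar> powr p)}"

end

theory Submission
  imports Defs
begin

definition dZ :: "real \<Rightarrow> real" where "dZ t = min (frac t) (1 - frac t)"

lemma dZ_nonneg: "0 \<le> dZ t"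
  unfolding dZ_def using frac_lt_1[of t] frac_ge_0[of t] by simp

lemma dZ_le_half: "dZ t \<le> 1/2"
  unfolding dZ_def by (simp add: min_def)

lemma dZ_le: assumes "x \<in> \<int>" shows "dZ t \<le> \<bar>t - x\<bar>"
proof -
  obtain k where k: "x = of_int k" using assms Ints_cases by blast
  show ?thesis
  proof (cases "k \<le> floor t")
    case True
    then have "real_of_int k \<le> of_int (floor t)" by linarith
    then have "frac t \<le> \<bar>t - x\<bar>" using k by (simp add: frac_def)
    then show ?thesis unfolding dZ_def by simp
  next
    case False
    then have "real_of_int k \<ge> of_int (floor t) + 1" by linarith
    then have "1 - frac t \<le> \<bar>t - x\<bar>" using k floor_le_iff[of t] by (simp add: frac_def)
    then show ?thesis unfolding dZ_def by simp
  qed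
qed

lemma dZ_attained: "\<exists>x\<in>\<int>. dZ t = \<bar>t - x\<bar>"
proof (cases "frac t \<le> 1 - frac t")
  case True
  then have "dZ t = \<bar>t - of_int (floor t)\<bar>" unfolding dZ_def by (simp add: frac_def)
  then show ?thesis by (meson Ints_of_int)
next
  case False
  then have "dZ t = \<bar>t - (of_int (floor t) + 1)\<bar>" unfolding dZ_def
    using frac_lt_1[of t] by (simp add: frac_def)
  then show ?thesis by (metis Ints_1 Ints_add Ints_of_int)
qed

lemma dZ_lip: "dZ s \<le> dZ t + \<bar>s - t\<bar>"
proof -
  obtain x where x: "x \<in> \<int>" "dZ t = \<bar>t - x\<bar>" using dZ_attained by blast
  have "dZ s \<le> \<bar>s - x\<bar>" using dZ_le[OF x(1)] .
  also have "\<dots> \<le> \<bar>s - t\<bar> + \<bar>t - x\<bar>" by simp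
  finally show ?thesis using x by simp
qed

lemma dZ_int_shift: "dZ (t + of_int k) = dZ t"
  unfolding dZ_def by (simp add: frac_add_of_int_right)

lemma dZ_small: "0 \<le> t \<Longrightarrow> t \<le> 1/2 \<Longrightarrow> dZ t = t"
  unfolding dZ_def by (simp add: frac_eq)

lemma dZ_big: "1/2 \<le> t \<Longrightarrow> t \<le> 1 \<Longrightarrow> dZ t = 1 - t"
proof (cases "t = 1")
  case True then show ?thesis unfolding dZ_def by simp
next
  case False
  assume "1/2 \<le> t" "t \<le> 1"
  with False show ?thesis unfolding dZ_def by (simp add: frac_eq)
qed

lemma pow_lip:
  fixes a b p :: real
  assumes "0 \<le> a" "a \<le> b" "b \<le> 1" "1 \<le> p"
  shows "b powr p - a powr p \<le> p * (b - a)"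
proof (cases "a = b")
  case True then show ?thesis by simp
next
  case False
  then have ab: "a < b" using assms by simp
  have cont: "continuous_on {a..b} (\<lambda>x. x powr p)"
    using assms by (intro continuous_on_powr') (auto intro: continuous_intros)
  have d: "((\<lambda>x. x powr p) has_real_derivative p * x powr (p - 1)) (at x)" if "0 < x" for x
    using that by (intro derivative_eq_intros) (auto simp: powr_diff)
  have "(\<lambda>x. x powr p) differentiable (at x)" if "a < x" "x < b" for x
    using assms d that unfolding real_differentiable_def by (meson le_less_trans)
  from MVT[OF ab cont this] obtain l z where z: "a < z" "z < b"
    "((\<lambda>x. x powr p) has_real_derivative l) (at z)" "b powr p - a powr p = (b - a) * l" by blast
  have "((\<lambda>x. x powr p) has_real_derivative p * z powr (p - 1)) (at z)"
    using z assms d by simp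
  with z(3) have l: "l = p * z powr (p - 1)" using DERIV_unique by blast
  have "z powr (p - 1) \<le> 1" using z assms by (intro powr_le1) auto
  then have "l \<le> p" using l assms by (simp add: mult_left_le)
  then show ?thesis using z(4) ab by (simp add: mult_left_mono mult.commute)
qed

definition gp :: "real \<Rightarrow> real \<Rightarrow> real" where "gp p t = dZ t powr p"

lemma gp_lip: assumes "1 \<le> p" shows "\<bar>gp p s - gp p t\<bar> \<le> p * \<bar>s - t\<bar>"
proof -
  have h: "gp p x - gp p y \<le> p * \<bar>x - y\<bar>" if "dZ y \<le> dZ x" for x y
  proof -
    have "gp p x - gp p y \<le> p * (dZ x - dZ y)" unfolding gp_def
      using pow_lip[of "dZ y" "dZ x" p] that assms dZ_nonneg[of y] dZ_le_half[of x] by simp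
    also have "\<dots> \<le> p * \<bar>x - y\<bar>" using dZ_lip[of x y] assms by (intro mult_left_mono) auto
    finally show ?thesis .
  qed
  have m: "gp p y \<le> gp p x" if "dZ y \<le> dZ x" for x y
    unfolding gp_def using that dZ_nonneg[of y] assms by (intro powr_mono2) auto
  show ?thesis
  proof (cases "dZ t \<le> dZ s")
    case True then show ?thesis using h[of t s] m[of t s] by simp
  next
    case False then show ?thesis using h[of s t] m[of s t] by (simp add: abs_minus_commute)
  qed
qed

lemma gp_nonneg: "0 \<le> gp p t" unfolding gp_def by simp

lemma gp_le1: "1 \<le> p \<Longrightarrow> gp p t \<le> 1"
  unfolding gp_def using dZ_nonneg[of t] dZ_le_half[of t] by (intro powr_le1) auto

lemma gp_int_shift: "gp p (t + of_int k) = gp p t" unfolding gp_def by (simp add: dZ_int_shift)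

lemma gp_cont: assumes "1 \<le> p" shows "continuous_on S (gp p)"
proof -
  have "p-lipschitz_on S (gp p)"
    using gp_lip[OF assms] assms by (intro lipschitz_onI) (auto simp: dist_real_def)
  then show ?thesis by (rule lipschitz_on_continuous_on)
qed

definition HH :: "real \<Rightarrow> real" where "HH p = (1/2) powr p / (p + 1)"

lemma Icomb: "a \<le> c \<Longrightarrow> c \<le> b \<Longrightarrow> 1 \<le> p \<Longrightarrow>
  integral {a..c} (gp p) + integral {c..b} (gp p) = integral {a..b} (gp p)"
  by (intro Henstock_Kurzweil_Integration.integral_combine integrable_continuous_real gp_cont) auto

lemma Ishift: "integral {a + of_int k..b + of_int k} (gp p) = integral {a..b} (gp p)"
proof -
  have "(gp p \<circ> (+) (of_int k)) = gp p" by (rule ext) (simp add: gp_int_shift add.commute)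
  then show ?thesis using integral_shift_Icc_real[of a b "gp p" "of_int k"] by simp
qed

lemma I01: assumes p: "1 \<le> p" shows "integral {0..1} (gp p) = HH p"
proof -
  define F1 where "F1 t = t powr (p+1) / (p+1)" for t :: real
  define F2 where "F2 t = - ((1 - t) powr (p+1) / (p+1))" for t :: real
  have c1: "continuous_on {0..1/2} F1" unfolding F1_def using p
    by (intro continuous_intros continuous_on_powr') auto
  have d1: "(F1 has_vector_derivative t powr p) (at t)" if "t \<in> {0<..<1/2}" for t
  proof -
    have "(F1 has_real_derivative ((p+1) * t powr (p + 1 - 1)) / (p+1)) (at t)"
      unfolding F1_def using that p by (intro derivative_eq_intros) auto
    then show ?thesis using p by (simp add: has_real_derivative_iff_has_vector_derivative)
  qed
  have i1: "((\<lambda>t. t powr p) has_integral F1 (1/2) - F1 0) {0..1/2}"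
    by (rule fundamental_theorem_of_calculus_interior[OF _ c1 d1]) auto
  have c2: "continuous_on {1/2..1} F2" unfolding F2_def using p
    by (intro continuous_intros continuous_on_powr') auto
  have d2: "(F2 has_vector_derivative (1 - t) powr p) (at t)" if "t \<in> {1/2<..<1}" for t
  proof -
    have "(F2 has_real_derivative - ((p+1) * (1 - t) powr (p + 1 - 1) * (0 - 1)) / (p+1)) (at t)"
      unfolding F2_def using that p by (intro derivative_eq_intros) auto
    then show ?thesis using p by (simp add: has_real_derivative_iff_has_vector_derivative)
  qed
  have i2: "((\<lambda>t. (1 - t) powr p) has_integral F2 1 - F2 (1/2)) {1/2..1}"
    by (rule fundamental_theorem_of_calculus_interior[OF _ c2 d2]) auto
  have e1: "integral {0..1/2} (gp p) = F1 (1/2) - F1 0"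
  proof -
    have "integral {0..1/2} (gp p) = integral {0..1/2} (\<lambda>t. t powr p)"
      by (rule integral_cong) (simp add: gp_def dZ_small)
    then show ?thesis using i1 by (simp add: integral_unique)
  qed
  have e2: "integral {1/2..1} (gp p) = F2 1 - F2 (1/2)"
  proof -
    have "integral {1/2..1} (gp p) = integral {1/2..1} (\<lambda>t. (1 - t) powr p)"
      by (rule integral_cong) (simp add: gp_def dZ_big)
    then show ?thesis using i2 by (simp add: integral_unique)
  qed
  have "integral {0..1} (gp p) = integral {0..1/2} (gp p) + integral {1/2..1} (gp p)"
    using Icomb[of 0 "1/2" 1 p] p by simp
  also have "\<dots> = 2 * ((1/2) powr (p+1) / (p+1))"
    using p unfolding e1 e2 F1_def F2_def by simp
  also have "\<dots> = HH p"
    unfolding HH_def using p by (simp add: powr_add field_simps)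
  finally show ?thesis .
qed

lemma Iperiod: assumes p: "1 \<le> p" shows "integral {z..z+1} (gp p) = HH p"
proof -
  define N where "N = floor z"
  have N1: "of_int N \<le> z" "z \<le> of_int N + 1" unfolding N_def by linarith+
  have "integral {z..z+1} (gp p) = integral {z..of_int N + 1} (gp p) + integral {of_int N + 1..z+1} (gp p)"
    using Icomb[of z "of_int N + 1" "z+1" p] N1 p by simp
  also have "integral {of_int N + 1..z+1} (gp p) = integral {of_int N..z} (gp p)"
    using Ishift[of "of_int N" 1 z p] by simp
  also have "integral {z..of_int N + 1} (gp p) + integral {of_int N..z} (gp p)
      = integral {of_int N..of_int N + 1} (gp p)"
    using Icomb[of "of_int N" z "of_int N + 1" p] N1 p by simp
  also have "\<dots> = integral {0..1} (gp p)"
    using Ishift[of 0 N 1 p] by (simp add: add.commute)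
  finally show ?thesis using I01[OF p] by simp
qed

lemma Iupper: assumes p: "1 \<le> p" and h: "0 \<le> h"
  shows "integral {a..a+h} (gp p) \<le> h * (gp p a + p * h)"
proof -
  have "integral {a..a+h} (gp p) \<le> integral {a..a+h} (\<lambda>x. gp p a + p * h)"
  proof (rule integral_le)
    show "gp p integrable_on {a..a+h}" by (intro integrable_continuous_real gp_cont p)
    show "(\<lambda>x. gp p a + p * h) integrable_on {a..a+h}" by (intro integrable_continuous_real continuous_intros)
    fix x assume x: "x \<in> {a..a+h}"
    have "\<bar>gp p x - gp p a\<bar> \<le> p * \<bar>x - a\<bar>" by (rule gp_lip[OF p])
    moreover have "p * \<bar>x - a\<bar> \<le> p * h" using x p by (intro mult_left_mono) auto
    ultimately show "gp p x \<le> gp p a + p * h" by linarith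
  qed
  also have "\<dots> = h * (gp p a + p * h)" using h by simp
  finally show ?thesis .
qed

lemma riemann_lower:
  assumes p: "1 \<le> p" and m: "0 < m"
  shows "HH p - p / real m \<le> (\<Sum>k<m. gp p (z + real k / real m)) / real m"
proof -
  have tel: "(\<Sum>k<j. integral {z + real k / real m..z + real (Suc k) / real m} (gp p))
     = integral {z..z + real j / real m} (gp p)" for j
  proof (induction j)
    case 0 then show ?case by simp
  next
    case (Suc j)
    have "integral {z..z + real j / real m} (gp p) + integral {z + real j / real m..z + real (Suc j) / real m} (gp p)
       = integral {z..z + real (Suc j) / real m} (gp p)"
      using m p by (intro Icomb) (auto simp: divide_right_mono)
    then show ?case using Suc by simp
  qed
  have "HH p = integral {z..z + real m / real m} (gp p)" using Iperiod[OF p, of z] m by simp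
  also have "\<dots> = (\<Sum>k<m. integral {z + real k / real m..z + real (Suc k) / real m} (gp p))"
    using tel by simp
  also have "\<dots> \<le> (\<Sum>k<m. (1 / real m) * (gp p (z + real k / real m) + p * (1 / real m)))"
  proof (rule sum_mono)
    fix k assume "k \<in> {..<m}"
    have eq: "z + real (Suc k) / real m = (z + real k / real m) + 1 / real m"
      using m by (simp add: field_simps)
    show "integral {z + real k / real m..z + real (Suc k) / real m} (gp p)
        \<le> (1 / real m) * (gp p (z + real k / real m) + p * (1 / real m))"
      unfolding eq by (rule Iupper[OF p]) simp
  qed
  also have "\<dots> = (\<Sum>k<m. gp p (z + real k / real m) / real m + p / (real m * real m))"
    by (rule sum.cong) (auto simp: field_simps)
  also have "\<dots> = (\<Sum>k<m. gp p (z + real k / real m)) / real m + p / real m"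
    using m by (simp add: sum.distrib sum_divide_distrib)
  finally show ?thesis by simp
qed

lemma shift_integrable:
  fixes f :: "real \<Rightarrow> real"
  assumes "integrable lborel f" shows "integrable lborel (\<lambda>y. f (y + t))"
  using lborel_integrable_real_affine[OF assms, of 1 t] by (simp add: add.commute)

lemma shift_integral:
  fixes f :: "real \<Rightarrow> real"
  shows "(\<integral>y. f (y + t) \<partial>lborel) = (\<integral>y. f y \<partial>lborel)"
  using lborel_integral_real_affine[of 1 f t] by (simp add: add.commute)

definition TT :: "(real \<Rightarrow> real) \<Rightarrow> real \<Rightarrow> real" where
  "TT f t = (\<integral>y. \<bar>f (y + t) - f y\<bar> \<partial>lborel)"

lemma TT_integrable: fixes f :: "real \<Rightarrow> real" shows "integrable lborel f \<Longrightarrow> integrable lborel (\<lambda>y. \<bar>f (y + t) - f y\<bar>)"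
  by (intro integrable_abs Bochner_Integration.integrable_diff shift_integrable)

lemma TT_nonneg: "0 \<le> TT f t" unfolding TT_def by simp

lemma TT_approx:
  assumes f: "integrable lborel f" and g: "integrable lborel g"
  shows "TT f t \<le> 2 * (\<integral>y. \<bar>f y - g y\<bar> \<partial>lborel) + TT g t"
proof -
  have i1: "integrable lborel (\<lambda>y. \<bar>f y - g y\<bar>)" using f g by auto
  have i2: "integrable lborel (\<lambda>y. \<bar>f (y + t) - g (y + t)\<bar>)"
    using shift_integrable[OF i1, of t] by simp
  have "TT f t \<le> (\<integral>y. \<bar>f (y + t) - g (y + t)\<bar> + \<bar>g (y + t) - g y\<bar> + \<bar>f y - g y\<bar> \<partial>lborel)"
    unfolding TT_def
    by (rule integral_mono) (use i1 i2 TT_integrable[OF f] TT_integrable[OF g] in auto)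
  also have "\<dots> = (\<integral>y. \<bar>f (y + t) - g (y + t)\<bar> \<partial>lborel) + TT g t + (\<integral>y. \<bar>f y - g y\<bar> \<partial>lborel)"
    unfolding TT_def using i1 i2 TT_integrable[OF g]
    by (simp add: Bochner_Integration.integral_add)
  also have "(\<integral>y. \<bar>f (y + t) - g (y + t)\<bar> \<partial>lborel) = (\<integral>y. \<bar>f y - g y\<bar> \<partial>lborel)"
    using shift_integral[of "\<lambda>y. \<bar>f y - g y\<bar>" t] by simp
  finally show ?thesis by simp
qed

lemma TT_add:
  assumes f: "integrable lborel f" and g: "integrable lborel g"
  shows "TT (\<lambda>x. f x + g x) t \<le> TT f t + TT g t"
proof -
  have "TT (\<lambda>x. f x + g x) t \<le> (\<integral>y. \<bar>f (y + t) - f y\<bar> + \<bar>g (y + t) - g y\<bar> \<partial>lborel)"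
    unfolding TT_def
    by (rule integral_mono) (use TT_integrable[OF f] TT_integrable[OF g] f g in \<open>auto intro!: TT_integrable\<close>)
  also have "\<dots> = TT f t + TT g t"
    unfolding TT_def using TT_integrable[OF f] TT_integrable[OF g]
    by (simp add: Bochner_Integration.integral_add)
  finally show ?thesis .
qed

lemma tendsto0_eps:
  fixes x :: "nat \<Rightarrow> real"
  assumes "\<And>e. 0 < e \<Longrightarrow> eventually (\<lambda>k. \<bar>x k\<bar> < e) sequentially"
  shows "x \<longlonglongrightarrow> 0"
  using assms unfolding LIMSEQ_iff eventually_sequentially by auto

lemma open_overlap:
  fixes U :: "real set" and t :: "nat \<Rightarrow> real"
  assumes U: "open U" "emeasure lborel U < \<infinity>" and t: "t \<longlonglongrightarrow> 0"
  shows "(\<lambda>k. \<integral>y. indicat_real U y * indicat_real U (y + t k) \<partial>lborel) \<longlonglongrightarrow> measure lborel U"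
proof -
  have Us: "U \<in> sets lborel" using U by simp
  have "(\<lambda>k. \<integral>y. indicat_real U y * indicat_real U (y + t k) \<partial>lborel) \<longlonglongrightarrow> (\<integral>y. indicat_real U y \<partial>lborel)"
  proof (rule integral_dominated_convergence[where w = "indicat_real U :: real \<Rightarrow> real" and f = "indicat_real U"
      and s = "\<lambda>k y. indicat_real U y * indicat_real U (y + t k)"])
    show "integrable lborel (indicat_real U :: real \<Rightarrow> real)"
      using U Us by (simp add: integrable_indicator_iff)
    show "AE y in lborel. (\<lambda>k. indicat_real U y * indicat_real U (y + t k) :: real) \<longlonglongrightarrow> indicat_real U y"
    proof (rule AE_I2)
      fix y
      show "(\<lambda>k. indicat_real U y * indicat_real U (y + t k) :: real) \<longlonglongrightarrow> indicat_real U y"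
      proof (cases "y \<in> U")
        case True
        have "(\<lambda>k. y + t k) \<longlonglongrightarrow> y + 0" by (intro tendsto_intros t)
        then have "eventually (\<lambda>k. y + t k \<in> U) sequentially"
          using True U by (intro topological_tendstoD) auto
        then have "eventually (\<lambda>k. (indicat_real U y * indicat_real U (y + t k) :: real) = indicat_real U y) sequentially"
          by eventually_elim (use True in auto)
        then show ?thesis by (rule tendsto_eventually)
      next
        case False then show ?thesis by simp
      qed
    qed
    show "AE y in lborel. norm (indicat_real U y * indicat_real U (y + t k) :: real) \<le> indicat_real U y" for k
      by (intro AE_I2) (auto simp: indicator_def)
  qed (use Us in auto)
  moreover have "(\<integral>y. indicat_real U y \<partial>lborel) = measure lborel U"
    using U Us by (simp add: Bochner_Integration.integral_indicator less_top)
  ultimately show ?thesis by simp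
qed

lemma TT_indicator:
  fixes A :: "real set" and t :: "nat \<Rightarrow> real" and c :: real
  assumes A: "A \<in> sets lborel" "emeasure lborel A < \<infinity>" and t: "t \<longlonglongrightarrow> 0"
  shows "(\<lambda>k. TT (\<lambda>x. indicator A x *\<^sub>R c) (t k)) \<longlonglongrightarrow> 0"
proof (rule tendsto0_eps)
  fix e :: real assume e: "0 < e"
  define e1 where "e1 = e / (4 * (\<bar>c\<bar> + 1))"
  have e1: "0 < e1" unfolding e1_def using e by (intro divide_pos_pos) auto
  have Ab: "A \<in> sets borel" using A(1) by simp
  obtain U where U: "open U" "A \<subseteq> U" "emeasure lborel (U - A) < e1"
    by (rule outer_regular_lborel[OF Ab e1])
  have Us: "U \<in> sets lborel" using U(1) by simp
  have UA: "U - A \<in> sets lborel" using Us A(1) by (rule sets.Diff)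
  have "ennreal e1 < \<infinity>" by simp
  with U(3) have UAf: "emeasure lborel (U - A) < \<infinity>" by (rule order.strict_trans)
  have "emeasure lborel U \<le> emeasure lborel (A \<union> (U - A))"
    by (rule emeasure_mono) (use Us A U(2) in auto)
  also have "\<dots> \<le> emeasure lborel A + emeasure lborel (U - A)"
    by (rule emeasure_subadditive[OF A(1) UA])
  finally have le1: "emeasure lborel U \<le> emeasure lborel A + emeasure lborel (U - A)" .
  have "emeasure lborel A + emeasure lborel (U - A) < \<infinity>" using A(2) UAf by simp
  with le1 have Uf: "emeasure lborel U < \<infinity>" by (rule order.strict_trans1)
  have "emeasure lborel (U - A) = ennreal (measure lborel (U - A))"
    using UAf by (intro emeasure_eq_ennreal_measure) simp
  then have mUA: "measure lborel (U - A) < e1"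
    using U(3) ennreal_less_iff[of "measure lborel (U - A)" e1] by simp
  have iU: "integrable lborel (indicat_real U)" using Uf Us by (simp add: integrable_indicator_iff)
  have iUA: "integrable lborel (indicat_real (U - A))" using UAf UA by (simp add: integrable_indicator_iff)
  have iA: "integrable lborel (indicat_real A)" using A by (simp add: integrable_indicator_iff)
  have lim: "(\<lambda>k. \<integral>y. indicat_real U y * indicat_real U (y + t k) \<partial>lborel) \<longlonglongrightarrow> measure lborel U"
    by (rule open_overlap[OF U(1) Uf t])
  then have "eventually (\<lambda>k. \<bar>(\<integral>y. indicat_real U y * indicat_real U (y + t k) \<partial>lborel) - measure lborel U\<bar> < e1) sequentially"
    using tendstoD[OF lim e1] by (simp add: dist_real_def)
  then show "eventually (\<lambda>k. \<bar>TT (\<lambda>x. indicator A x *\<^sub>R c) (t k)\<bar> < e) sequentially"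
  proof eventually_elim
    case (elim k)
    define s where "s = t k"
    have iUs: "integrable lborel (\<lambda>y. indicat_real U (y + s))" by (rule shift_integrable[OF iU])
    have iUAs: "integrable lborel (\<lambda>y. indicat_real (U - A) (y + s))" by (rule shift_integrable[OF iUA])
    have iUU: "integrable lborel (\<lambda>y. indicat_real U y * indicat_real U (y + s))"
    proof (rule Bochner_Integration.integrable_bound[OF iU])
      show "(\<lambda>y. indicat_real U y * indicat_real U (y + s)) \<in> borel_measurable lborel"
        using borel_measurable_integrable[OF iU] borel_measurable_integrable[OF iUs] by (rule borel_measurable_times)
      show "AE y in lborel. norm (indicat_real U y * indicat_real U (y + s)) \<le> norm (indicat_real U y)"
        by (intro AE_I2) (auto simp: indicator_def)
    qed
    have pw: "\<bar>indicator A x *\<^sub>R c - indicator A y *\<^sub>R c\<bar> \<le> \<bar>c\<bar> *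
       (indicat_real (U - A) x + (indicat_real U x + indicat_real U y - 2 * (indicat_real U y * indicat_real U x)) + indicat_real (U - A) y)"
      for x y :: real
    proof -
      have "\<bar>indicator A x *\<^sub>R c - indicator A y *\<^sub>R c\<bar> = \<bar>c\<bar> * \<bar>indicat_real A x - indicat_real A y\<bar>"
      proof -
        have "indicator A x *\<^sub>R c - indicator A y *\<^sub>R c = c * (indicat_real A x - indicat_real A y)"
          by (simp add: algebra_simps)
        then show ?thesis by (simp add: abs_mult)
      qed
      moreover have "\<bar>indicat_real A x - indicat_real A y\<bar> \<le>
        indicat_real (U - A) x + (indicat_real U x + indicat_real U y - 2 * (indicat_real U y * indicat_real U x)) + indicat_real (U - A) y"
        using U(2) by (cases "x \<in> A"; cases "y \<in> A"; cases "x \<in> U"; cases "y \<in> U") auto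
      ultimately show ?thesis by (simp add: mult_left_mono)
    qed
    have "TT (\<lambda>x. indicator A x *\<^sub>R c) s \<le> (\<integral>y. \<bar>c\<bar> *
       (indicat_real (U - A) (y + s) + (indicat_real U (y + s) + indicat_real U y - 2 * (indicat_real U y * indicat_real U (y + s))) + indicat_real (U - A) y) \<partial>lborel)"
      unfolding TT_def
    proof (rule integral_mono)
      show "integrable lborel (\<lambda>y. \<bar>indicator A (y + s) *\<^sub>R c - indicator A y *\<^sub>R c\<bar>)"
        by (rule TT_integrable) (use iA in simp)
      show "integrable lborel (\<lambda>y. \<bar>c\<bar> *
       (indicat_real (U - A) (y + s) + (indicat_real U (y + s) + indicat_real U y - 2 * (indicat_real U y * indicat_real U (y + s))) + indicat_real (U - A) y))"
        by (intro integrable_mult_right Bochner_Integration.integrable_add Bochner_Integration.integrable_diff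
            iU iUA iUs iUAs iUU)
    qed (rule pw)
    also have "\<dots> = \<bar>c\<bar> * ((\<integral>y. indicat_real (U - A) (y + s) \<partial>lborel) + ((\<integral>y. indicat_real U (y + s) \<partial>lborel)
        + (\<integral>y. indicat_real U y \<partial>lborel) - 2 * (\<integral>y. indicat_real U y * indicat_real U (y + s) \<partial>lborel))
        + (\<integral>y. indicat_real (U - A) y \<partial>lborel))"
      using iU iUA iUs iUAs iUU by simp
    also have "(\<integral>y. indicat_real (U - A) (y + s) \<partial>lborel) = (\<integral>y. indicat_real (U - A) y \<partial>lborel)"
      by (rule shift_integral)
    also have "(\<integral>y. indicat_real U (y + s) \<partial>lborel) = (\<integral>y. indicat_real U y \<partial>lborel)"
      by (rule shift_integral)
    also have "(\<integral>y. indicat_real U y \<partial>lborel) = measure lborel U"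
      by simp
    also have "(\<integral>y. indicat_real (U - A) y \<partial>lborel) = measure lborel (U - A)"
      by simp
    also have "\<bar>c\<bar> * (measure lborel (U - A) + (measure lborel U + measure lborel U
        - 2 * (\<integral>y. indicat_real U y * indicat_real U (y + s) \<partial>lborel)) + measure lborel (U - A))
      = \<bar>c\<bar> * (2 * measure lborel (U - A) +
        2 * (measure lborel U - (\<integral>y. indicat_real U y * indicat_real U (y + s) \<partial>lborel)))"
      by (simp add: algebra_simps)
    finally have le: "TT (\<lambda>x. indicator A x *\<^sub>R c) s \<le> \<bar>c\<bar> * (2 * measure lborel (U - A) +
        2 * (measure lborel U - (\<integral>y. indicat_real U y * indicat_real U (y + s) \<partial>lborel)))" .
    have "\<bar>c\<bar> * (2 * measure lborel (U - A) + 2 * (measure lborel U - (\<integral>y. indicat_real U y * indicat_real U (y + s) \<partial>lborel)))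
        \<le> \<bar>c\<bar> * (2 * e1 + 2 * e1)"
      using elim mUA unfolding s_def by (intro mult_left_mono) auto
    also have "2 * e1 + 2 * e1 = e / (\<bar>c\<bar> + 1)"
    proof -
      have "2 * e1 + 2 * e1 = (4 * e) / (4 * (\<bar>c\<bar> + 1))" unfolding e1_def by simp
      also have "\<dots> = e / (\<bar>c\<bar> + 1)" by (rule mult_divide_mult_cancel_left) simp
      finally show ?thesis .
    qed
    also have "\<bar>c\<bar> * (e / (\<bar>c\<bar> + 1)) = e * (\<bar>c\<bar> / (\<bar>c\<bar> + 1))"
      by simp
    also have "\<dots> < e"
    proof -
      have "\<bar>c\<bar> / (\<bar>c\<bar> + 1) < 1" by simp
      then show ?thesis using e mult_strict_left_mono[of "\<bar>c\<bar> / (\<bar>c\<bar> + 1)" 1 e] by simp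
    qed
    finally show ?case using le TT_nonneg unfolding s_def by simp
  qed
qed

lemma L1_approx_tendsto:
  fixes f :: "real \<Rightarrow> real"
  assumes si: "\<And>i. integrable lborel (s i)" and f: "integrable lborel f"
    and lim: "\<And>x. (\<lambda>i. s i x) \<longlonglongrightarrow> f x" and bd: "\<And>i x. norm (s i x) \<le> 2 * norm (f x)"
  shows "(\<lambda>i. \<integral>y. \<bar>s i y - f y\<bar> \<partial>lborel) \<longlonglongrightarrow> 0"
proof -
  have "(\<lambda>i. \<integral>y. \<bar>s i y - f y\<bar> \<partial>lborel) \<longlonglongrightarrow> integral\<^sup>L (lborel :: real measure) (\<lambda>y. 0::real)"
  proof (rule integral_dominated_convergence[where w = "\<lambda>y. 3 * \<bar>f y\<bar>" and f = "\<lambda>y. 0 :: real"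
      and s = "\<lambda>i y. \<bar>s i y - f y\<bar>"])
    show "integrable lborel (\<lambda>y. 3 * \<bar>f y\<bar>)" using f by simp
    show "(\<lambda>y. \<bar>s i y - f y\<bar>) \<in> borel_measurable lborel" for i
      using si f by (intro borel_measurable_abs borel_measurable_diff borel_measurable_integrable)
    show "AE y in lborel. (\<lambda>i. \<bar>s i y - f y\<bar>) \<longlonglongrightarrow> 0"
    proof (rule AE_I2)
      fix y
      have "(\<lambda>i. s i y - f y) \<longlonglongrightarrow> f y - f y" by (intro tendsto_intros lim)
      then have "(\<lambda>i. \<bar>s i y - f y\<bar>) \<longlonglongrightarrow> \<bar>f y - f y\<bar>" by (rule tendsto_rabs)
      then show "(\<lambda>i. \<bar>s i y - f y\<bar>) \<longlonglongrightarrow> 0" by simp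
    qed
    show "AE y in lborel. norm (\<bar>s i y - f y\<bar>) \<le> 3 * \<bar>f y\<bar>" for i
    proof (rule AE_I2)
      fix y
      have a: "\<bar>s i y\<bar> \<le> 2 * \<bar>f y\<bar>" using bd[of i y] by (simp only: real_norm_def)
      have b: "\<bar>s i y - f y\<bar> \<le> \<bar>s i y\<bar> + \<bar>f y\<bar>" by (rule abs_triangle_ineq4)
      show "norm (\<bar>s i y - f y\<bar>) \<le> 3 * \<bar>f y\<bar>" unfolding real_norm_def abs_abs using a b by linarith
    qed
  qed (rule borel_measurable_const)
  then show ?thesis by (simp only: integral_zero)
qed

lemma TT_cont:
  fixes f :: "real \<Rightarrow> real" and t :: "nat \<Rightarrow> real"
  assumes f: "integrable lborel f" and t: "t \<longlonglongrightarrow> 0"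
  shows "(\<lambda>k. TT f (t k)) \<longlonglongrightarrow> 0"
proof -
  have "\<forall>t. t \<longlonglongrightarrow> 0 \<longrightarrow> (\<lambda>k. TT f (t k)) \<longlonglongrightarrow> 0" using f
  proof (induct rule: integrable_induct)
    case (base A c)
    show ?case
    proof (intro allI impI)
      fix t :: "nat \<Rightarrow> real" assume t: "t \<longlonglongrightarrow> 0"
      show "(\<lambda>k. TT (\<lambda>x. indicator A x *\<^sub>R c) (t k)) \<longlonglongrightarrow> 0"
        by (rule TT_indicator[OF base(1) base(2) t])
    qed
  next
    case (add f g)
    show ?case
    proof (intro allI impI)
      fix t :: "nat \<Rightarrow> real" assume t: "t \<longlonglongrightarrow> 0"
      have "(\<lambda>k. TT f (t k) + TT g (t k)) \<longlonglongrightarrow> 0 + 0"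
        using add(2)[rule_format, OF t] add(4)[rule_format, OF t] by (rule tendsto_add)
      then have "(\<lambda>k. TT f (t k) + TT g (t k)) \<longlonglongrightarrow> 0" by simp
      moreover have "eventually (\<lambda>k. norm (TT (\<lambda>x. f x + g x) (t k)) \<le> TT f (t k) + TT g (t k)) sequentially"
      proof (intro always_eventually allI)
        fix k
        show "norm (TT (\<lambda>x. f x + g x) (t k)) \<le> TT f (t k) + TT g (t k)"
          unfolding real_norm_def abs_of_nonneg[OF TT_nonneg] by (rule TT_add[OF add(1) add(3)])
      qed
      ultimately show "(\<lambda>k. TT (\<lambda>x. f x + g x) (t k)) \<longlonglongrightarrow> 0"
        by (rule Lim_null_comparison[rotated])
    qed
  next
    case (lim f s)
    show ?case
    proof (intro allI impI)
      fix t :: "nat \<Rightarrow> real" assume t: "t \<longlonglongrightarrow> 0"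
      show "(\<lambda>k. TT f (t k)) \<longlonglongrightarrow> 0"
      proof (rule tendsto0_eps)
        fix e :: real assume e: "0 < e"
        have D: "(\<lambda>i. \<integral>y. \<bar>s i y - f y\<bar> \<partial>lborel) \<longlonglongrightarrow> 0"
          by (rule L1_approx_tendsto[OF lim(1) lim(5) lim(3) lim(4)]) auto
        have "e / 4 > 0" using e by simp
        from tendstoD[OF D this] obtain i where i: "\<bar>\<integral>y. \<bar>s i y - f y\<bar> \<partial>lborel\<bar> < e / 4"
          unfolding eventually_sequentially dist_real_def by auto
        have "e / 2 > 0" using e by simp
        from tendstoD[OF lim(2)[of i, rule_format, OF t] this]
        have ev: "eventually (\<lambda>k. \<bar>TT (s i) (t k)\<bar> < e / 2) sequentially"
          by (simp add: dist_real_def)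
        then show "eventually (\<lambda>k. \<bar>TT f (t k)\<bar> < e) sequentially"
        proof eventually_elim
          case (elim k)
          have "TT f (t k) \<le> 2 * (\<integral>y. \<bar>f y - s i y\<bar> \<partial>lborel) + TT (s i) (t k)"
            by (rule TT_approx[OF lim(5) lim(1)])
          also have "(\<integral>y. \<bar>f y - s i y\<bar> \<partial>lborel) = (\<integral>y. \<bar>s i y - f y\<bar> \<partial>lborel)"
            by (simp add: abs_minus_commute)
          finally show ?case using i elim TT_nonneg[of f "t k"] by simp
        qed
      qed
    qed
  qed
  then have "t \<longlonglongrightarrow> 0 \<longrightarrow> (\<lambda>k. TT f (t k)) \<longlonglongrightarrow> 0" by (rule spec)
  then show ?thesis using t by (rule mp)
qed

lemma gp_meas: assumes p: "1 \<le> p" shows "(\<lambda>y. gp p (a * y + b)) \<in> borel_measurable lborel"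
proof -
  have "continuous_on UNIV (\<lambda>y. gp p (a * y + b))"
    by (rule continuous_on_compose2[OF gp_cont[OF p, of UNIV]]) (auto intro!: continuous_intros)
  then have "(\<lambda>y. gp p (a * y + b)) \<in> borel_measurable borel" by (rule borel_measurable_continuous_onI)
  then show ?thesis by (simp add: measurable_lborel2)
qed

lemma shift_lower:
  fixes f \<phi> :: "real \<Rightarrow> real"
  assumes f: "integrable lborel f" and phi: "\<phi> \<in> borel_measurable lborel"
    and b0: "\<And>y. 0 \<le> \<phi> y" and b1: "\<And>y. \<phi> y \<le> 1"
  shows "(\<integral>y. \<phi> (y + s) * f y \<partial>lborel) - TT f (- s) \<le> (\<integral>y. \<phi> y * f y \<partial>lborel)"
proof -
  have fs: "integrable lborel (\<lambda>y. f (y + - s))" by (rule shift_integrable[OF f])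
  have fm: "f \<in> borel_measurable lborel" using f by (rule borel_measurable_integrable)
  have fsm: "(\<lambda>y. f (y + - s)) \<in> borel_measurable lborel" using fs by (rule borel_measurable_integrable)
  have i1: "integrable lborel (\<lambda>y. \<phi> y * f (y + - s))"
  proof (rule Bochner_Integration.integrable_bound[OF fs])
    show "(\<lambda>y. \<phi> y * f (y + - s)) \<in> borel_measurable lborel" using phi fsm by (rule borel_measurable_times)
    show "AE y in lborel. norm (\<phi> y * f (y + - s)) \<le> norm (f (y + - s))"
    proof (rule AE_I2)
      fix y
      have "\<bar>\<phi> y\<bar> * \<bar>f (y + - s)\<bar> \<le> 1 * \<bar>f (y + - s)\<bar>"
        using b0[of y] b1[of y] by (intro mult_right_mono) auto
      then show "norm (\<phi> y * f (y + - s)) \<le> norm (f (y + - s))" by (simp add: abs_mult)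
    qed
  qed
  have i2: "integrable lborel (\<lambda>y. \<phi> y * f y)"
  proof (rule Bochner_Integration.integrable_bound[OF f])
    show "(\<lambda>y. \<phi> y * f y) \<in> borel_measurable lborel" using phi fm by (rule borel_measurable_times)
    show "AE y in lborel. norm (\<phi> y * f y) \<le> norm (f y)"
    proof (rule AE_I2)
      fix y
      have "\<bar>\<phi> y\<bar> * \<bar>f y\<bar> \<le> 1 * \<bar>f y\<bar>"
        using b0[of y] b1[of y] by (intro mult_right_mono) auto
      then show "norm (\<phi> y * f y) \<le> norm (f y)" by (simp add: abs_mult)
    qed
  qed
  have "(\<integral>y. \<phi> (y + s) * f y \<partial>lborel) = (\<integral>y. \<phi> (y + s) * f (y + s + - s) \<partial>lborel)" by simp
  also have "\<dots> = (\<integral>y. \<phi> y * f (y + - s) \<partial>lborel)"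
    by (rule shift_integral[of "\<lambda>y. \<phi> y * f (y + - s)" s])
  finally have e1: "(\<integral>y. \<phi> (y + s) * f y \<partial>lborel) = (\<integral>y. \<phi> y * f (y + - s) \<partial>lborel)" .
  have "(\<integral>y. \<phi> y * f (y + - s) \<partial>lborel) - (\<integral>y. \<phi> y * f y \<partial>lborel)
      = (\<integral>y. \<phi> y * f (y + - s) - \<phi> y * f y \<partial>lborel)"
    using i1 i2 by (rule Bochner_Integration.integral_diff[symmetric])
  also have "\<dots> \<le> (\<integral>y. \<bar>f (y + - s) - f y\<bar> \<partial>lborel)"
  proof (rule integral_mono)
    show "integrable lborel (\<lambda>y. \<phi> y * f (y + - s) - \<phi> y * f y)"
      using i1 i2 by (rule Bochner_Integration.integrable_diff)
    show "integrable lborel (\<lambda>y. \<bar>f (y + - s) - f y\<bar>)" by (rule TT_integrable[OF f])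
    fix y
    have "\<phi> y * f (y + - s) - \<phi> y * f y = \<phi> y * (f (y + - s) - f y)" by (simp add: algebra_simps)
    also have "\<dots> \<le> \<bar>\<phi> y\<bar> * \<bar>f (y + - s) - f y\<bar>" by (metis abs_ge_self abs_mult)
    also have "\<dots> \<le> 1 * \<bar>f (y + - s) - f y\<bar>"
      using b0[of y] b1[of y] by (intro mult_right_mono) auto
    finally show "\<phi> y * f (y + - s) - \<phi> y * f y \<le> \<bar>f (y + - s) - f y\<bar>" by simp
  qed
  also have "\<dots> = TT f (- s)" unfolding TT_def by simp
  finally show ?thesis using e1 by simp
qed

lemma E_lower:
  fixes f :: "real \<Rightarrow> real" and c :: real and m n :: nat
  assumes p: "1 \<le> p" and f: "integrable lborel f" and f0: "\<And>y. 0 \<le> f y"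
    and f1: "(\<integral>y. f y \<partial>lborel) = 1" and m: "0 < m" and n: "0 < n"
  shows "HH p - p / real m - (\<Sum>k<m. TT f (- (real k / (real m * real n)))) / real m
     \<le> (\<integral>y. gp p (real n * y - c) * f y \<partial>lborel)"
proof -
  define \<phi> where "\<phi> y = gp p (real n * y - c)" for y
  define s where "s k = real k / (real m * real n)" for k :: nat
  have phim: "\<phi> \<in> borel_measurable lborel"
    unfolding \<phi>_def using gp_meas[OF p, of "real n" "- c"] by simp
  have fm: "f \<in> borel_measurable lborel" using f by (rule borel_measurable_integrable)
  have int_k: "integrable lborel (\<lambda>y. \<phi> (y + s k) * f y)" for k
  proof (rule Bochner_Integration.integrable_bound[OF f])
    have "(\<lambda>y. \<phi> (y + s k)) \<in> borel_measurable lborel"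
      unfolding \<phi>_def using gp_meas[OF p, of "real n" "real n * s k - c"]
      by (simp add: algebra_simps)
    then show "(\<lambda>y. \<phi> (y + s k) * f y) \<in> borel_measurable lborel" using fm by (rule borel_measurable_times)
    show "AE y in lborel. norm (\<phi> (y + s k) * f y) \<le> norm (f y)"
    proof (rule AE_I2)
      fix y
      have "\<bar>\<phi> (y + s k)\<bar> * \<bar>f y\<bar> \<le> 1 * \<bar>f y\<bar>"
        unfolding \<phi>_def using gp_nonneg gp_le1[OF p] by (intro mult_right_mono) auto
      then show "norm (\<phi> (y + s k) * f y) \<le> norm (f y)" by (simp add: abs_mult)
    qed
  qed
  have low: "(\<integral>y. \<phi> (y + s k) * f y \<partial>lborel) - TT f (- s k) \<le> (\<integral>y. \<phi> y * f y \<partial>lborel)" for k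
    by (rule shift_lower[OF f phim]) (auto simp: \<phi>_def gp_nonneg gp_le1[OF p])
  have shift_eq: "\<phi> (y + s k) = gp p ((real n * y - c) + real k / real m)" for y k
  proof -
    have "real n * (y + real k / (real m * real n)) - c = (real n * y - c) + real k / real m"
      using m n by (simp add: field_simps)
    then show ?thesis unfolding \<phi>_def s_def by (simp only:)
  qed
  have "(HH p - p / real m) = (\<integral>y. (HH p - p / real m) * f y \<partial>lborel)"
    using f1 by simp
  also have "\<dots> \<le> (\<integral>y. (\<Sum>k<m. \<phi> (y + s k) * f y) / real m \<partial>lborel)"
  proof (rule integral_mono)
    show "integrable lborel (\<lambda>y. (HH p - p / real m) * f y)" using f by simp
    show "integrable lborel (\<lambda>y. (\<Sum>k<m. \<phi> (y + s k) * f y) / real m)"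
      using int_k by (intro integrable_divide integrable_sum) auto
    fix y
    have "(HH p - p / real m) * f y \<le> ((\<Sum>k<m. gp p ((real n * y - c) + real k / real m)) / real m) * f y"
      using riemann_lower[OF p m, of "real n * y - c"] f0[of y] by (intro mult_right_mono) auto
    also have "\<dots> = (\<Sum>k<m. \<phi> (y + s k) * f y) / real m"
      by (simp add: shift_eq sum_distrib_right)
    finally show "(HH p - p / real m) * f y \<le> (\<Sum>k<m. \<phi> (y + s k) * f y) / real m" .
  qed
  also have "\<dots> = (\<Sum>k<m. (\<integral>y. \<phi> (y + s k) * f y \<partial>lborel)) / real m"
    using int_k by (simp add: Bochner_Integration.integral_sum)
  also have "\<dots> \<le> (\<Sum>k<m. (\<integral>y. \<phi> y * f y \<partial>lborel) + TT f (- s k)) / real m"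
    using low m by (intro divide_right_mono sum_mono) (auto simp: algebra_simps)
  also have "\<dots> = (\<integral>y. \<phi> y * f y \<partial>lborel) + (\<Sum>k<m. TT f (- s k)) / real m"
    using m by (simp add: sum.distrib add_divide_distrib)
  finally show ?thesis unfolding \<phi>_def s_def by simp
qed

lemma E_eventually:
  fixes f :: "real \<Rightarrow> real" and c :: "nat \<Rightarrow> real"
  assumes p: "1 \<le> p" and f: "integrable lborel f" and f0: "\<And>y. 0 \<le> f y"
    and f1: "(\<integral>y. f y \<partial>lborel) = 1" and e: "0 < e"
  shows "eventually (\<lambda>n. HH p - e < (\<integral>y. gp p (real n * y - c n) * f y \<partial>lborel)) sequentially"
proof -
  define m :: nat where "m = nat (ceiling (2 * p / e)) + 1"
  have m0: "0 < m" unfolding m_def by simp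
  have "2 * p / e < real m" unfolding m_def by linarith
  then have "2 * p < e * real m" using e by (simp add: field_simps)
  then have pm: "p / real m < e / 2" using m0 by (simp add: field_simps)
  have lim_k: "(\<lambda>n. TT f (- (real k / (real m * real n)))) \<longlonglongrightarrow> 0" for k
  proof (rule TT_cont[OF f])
    have "(\<lambda>n. - (real k / real m) * (1 / real n)) \<longlonglongrightarrow> - (real k / real m) * 0"
      by (intro tendsto_intros lim_inverse_n')
    then show "(\<lambda>n. - (real k / (real m * real n))) \<longlonglongrightarrow> 0" by simp
  qed
  have "(\<lambda>n. (\<Sum>k<m. TT f (- (real k / (real m * real n)))) / real m) \<longlonglongrightarrow> (\<Sum>k<m. 0) / real m"
    by (intro tendsto_divide tendsto_sum lim_k tendsto_const) (use m0 in simp)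
  then have "(\<lambda>n. (\<Sum>k<m. TT f (- (real k / (real m * real n)))) / real m) \<longlonglongrightarrow> 0" by simp
  from tendstoD[OF this, of "e / 2"] e
  have "eventually (\<lambda>n. dist ((\<Sum>k<m. TT f (- (real k / (real m * real n)))) / real m) 0 < e / 2) sequentially"
    by simp
  then have ev1: "eventually (\<lambda>n. (\<Sum>k<m. TT f (- (real k / (real m * real n)))) / real m < e / 2) sequentially"
    by eventually_elim (metis abs_ge_self diff_zero dist_real_def le_less_trans)
  have ev2: "eventually (\<lambda>n. 0 < n) sequentially" by (rule eventually_gt_at_top)
  show ?thesis using ev1 ev2
  proof eventually_elim
    case (elim n)
    have "HH p - p / real m - (\<Sum>k<m. TT f (- (real k / (real m * real n)))) / real m
       \<le> (\<integral>y. gp p (real n * y - c n) * f y \<partial>lborel)"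
      by (rule E_lower[OF p f f0 f1 m0 elim(2)])
    then show ?case using elim(1) pm by linarith
  qed
qed

lemma distr_pair_snd':
  assumes M: "prob_space M" and N: "prob_space N"
  shows "distr (M \<Otimes>\<^sub>M N) N snd = N"
proof (intro measure_eqI)
  interpret M: prob_space M by (rule M)
  interpret N: prob_space N by (rule N)
  interpret P: pair_sigma_finite M N ..
  fix A assume A: "A \<in> sets (distr (M \<Otimes>\<^sub>M N) N snd)"
  from A have "emeasure (distr (M \<Otimes>\<^sub>M N) N snd) A = emeasure (M \<Otimes>\<^sub>M N) (space M \<times> A)"
    by (auto simp add: emeasure_distr space_pair_measure dest: sets.sets_into_space intro!: arg_cong2[where f=emeasure])
  with A show "emeasure (distr (M \<Otimes>\<^sub>M N) N snd) A = emeasure N A"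
    by (simp add: N.emeasure_pair_measure_Times M.emeasure_space_1)
qed simp

lemma rd_prob: "real_distribution M \<Longrightarrow> prob_space M"
  unfolding real_distribution_def by simp

lemma gp_meas_borel: assumes p: "1 \<le> p" shows "(\<lambda>y. gp p (a * y + b)) \<in> borel_measurable borel"
proof -
  have "continuous_on UNIV (\<lambda>y. gp p (a * y + b))"
    by (rule continuous_on_compose2[OF gp_cont[OF p, of UNIV]]) (auto intro!: continuous_intros)
  then show ?thesis by (rule borel_measurable_continuous_onI)
qed

lemma powr_abs_diff_bound:
  fixes x y p :: real assumes p: "1 \<le> p"
  shows "\<bar>x - y\<bar> powr p \<le> 2 powr p * (\<bar>x\<bar> powr p + \<bar>y\<bar> powr p)"
proof -
  have "\<bar>x - y\<bar> \<le> 2 * max \<bar>x\<bar> \<bar>y\<bar>" by linarith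
  then have "\<bar>x - y\<bar> powr p \<le> (2 * max \<bar>x\<bar> \<bar>y\<bar>) powr p" using p by (intro powr_mono2) auto
  also have "\<dots> = 2 powr p * max \<bar>x\<bar> \<bar>y\<bar> powr p" by (simp add: powr_mult)
  also have "max \<bar>x\<bar> \<bar>y\<bar> powr p \<le> \<bar>x\<bar> powr p + \<bar>y\<bar> powr p"
    by (cases "\<bar>x\<bar> \<le> \<bar>y\<bar>") (auto simp: max_def)
  finally show ?thesis by (simp add: mult_left_mono)
qed

lemma coupling_key:
  fixes \<mu> \<nu> :: "real measure" and \<gamma> :: "(real \<times> real) measure" and n :: nat and b p :: real
  assumes p: "1 \<le> p" and cp: "coupling \<gamma> \<mu> \<nu>"
    and ig: "integrable \<gamma> (\<lambda>z. \<bar>fst z - snd z\<bar> powr p)"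
    and n: "0 < n" and lat: "AE x in \<mu>. real n * (x - b) \<in> \<int>"
  shows "(\<integral>y. gp p (real n * y - real n * b) \<partial>\<nu>) / real n powr p \<le> (\<integral>z. \<bar>fst z - snd z\<bar> powr p \<partial>\<gamma>)"
proof -
  have pg: "prob_space \<gamma>" and sg: "sets \<gamma> = sets (borel \<Otimes>\<^sub>M borel)"
    and m1: "distr \<gamma> borel fst = \<mu>" and m2: "distr \<gamma> borel snd = \<nu>"
    using cp unfolding coupling_def by auto
  interpret G: prob_space \<gamma> by (rule pg)
  have mfst: "fst \<in> \<gamma> \<rightarrow>\<^sub>M borel"
    by (subst measurable_cong_sets[OF sg refl]) simp
  have msnd: "snd \<in> \<gamma> \<rightarrow>\<^sub>M borel"
    by (subst measurable_cong_sets[OF sg refl]) simp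
  define h where "h y = gp p (real n * y + - (real n * b)) / real n powr p" for y
  have hm: "h \<in> borel_measurable borel" unfolding h_def
    by (intro borel_measurable_divide gp_meas_borel[OF p] borel_measurable_const)
  have npos: "0 < real n powr p" using n by simp
  have n1: "1 \<le> real n powr p" using n p by (intro ge_one_powr_ge_zero) auto
  have hb: "\<bar>h y\<bar> \<le> 1" for y
  proof -
    have "0 \<le> gp p (real n * y + - (real n * b))" "gp p (real n * y + - (real n * b)) \<le> 1"
      using gp_nonneg gp_le1[OF p] by auto
    then show ?thesis unfolding h_def using n1 npos by (auto simp: divide_le_eq)
  qed
  have "AE x in distr \<gamma> borel fst. real n * (x - b) \<in> \<int>" unfolding m1 by (rule lat)
  from AE_distrD[OF mfst this] have AEl: "AE z in \<gamma>. real n * (fst z - b) \<in> \<int>" .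
  have "(\<integral>z. h (snd z) \<partial>\<gamma>) \<le> (\<integral>z. \<bar>fst z - snd z\<bar> powr p \<partial>\<gamma>)"
  proof (rule integral_mono_AE)
    show "integrable \<gamma> (\<lambda>z. h (snd z))"
      by (rule G.integrable_const_bound[where B = 1]) (use hb measurable_compose[OF msnd hm] in auto)
    show "integrable \<gamma> (\<lambda>z. \<bar>fst z - snd z\<bar> powr p)" by (rule ig)
    show "AE z in \<gamma>. h (snd z) \<le> \<bar>fst z - snd z\<bar> powr p"
      using AEl
    proof eventually_elim
      case (elim z)
      have "dZ (real n * snd z - real n * b) \<le> \<bar>(real n * snd z - real n * b) - real n * (fst z - b)\<bar>"
        by (rule dZ_le[OF elim])
      also have "\<dots> = real n * \<bar>fst z - snd z\<bar>"
      proof -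
        have "(real n * snd z - real n * b) - real n * (fst z - b) = real n * (snd z - fst z)"
          by (simp add: algebra_simps)
        then show ?thesis by (simp add: abs_mult abs_minus_commute)
      qed
      finally have "dZ (real n * snd z - real n * b) / real n \<le> \<bar>fst z - snd z\<bar>"
        using n by (simp add: divide_le_eq mult.commute)
      then have "(dZ (real n * snd z - real n * b) / real n) powr p \<le> \<bar>fst z - snd z\<bar> powr p"
        using p dZ_nonneg n by (intro powr_mono2) auto
      then show ?case unfolding h_def gp_def using dZ_nonneg
        by (simp add: powr_divide)
    qed
  qed
  also have "(\<integral>z. h (snd z) \<partial>\<gamma>) = (\<integral>y. h y \<partial>\<nu>)"
    using integral_distr[OF msnd hm] m2 by simp
  also have "(\<integral>y. h y \<partial>\<nu>) = (\<integral>y. gp p (real n * y - real n * b) \<partial>\<nu>) / real n powr p"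
    unfolding h_def by simp
  finally show ?thesis .
qed

lemma wass_lower:
  fixes \<mu> \<nu> :: "real measure" and n :: nat and b p :: real
  assumes p: "1 \<le> p" and mu: "real_distribution \<mu>" and nu: "real_distribution \<nu>"
    and mum: "integrable \<mu> (\<lambda>x. \<bar>x\<bar> powr p)" and num: "integrable \<nu> (\<lambda>x. \<bar>x\<bar> powr p)"
    and n: "0 < n" and lat: "AE x in \<mu>. real n * (x - b) \<in> \<int>"
  shows "(\<integral>y. gp p (real n * y - real n * b) \<partial>\<nu>) powr (1/p) / real n \<le> wasserstein p \<mu> \<nu>"
proof -
  define E where "E = (\<integral>y. gp p (real n * y - real n * b) \<partial>\<nu>)"
  have E0: "0 \<le> E" unfolding E_def by (rule Bochner_Integration.integral_nonneg) (simp add: gp_nonneg)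
  define \<gamma>0 where "\<gamma>0 = \<mu> \<Otimes>\<^sub>M \<nu>"
  have pmu: "prob_space \<mu>" and pnu: "prob_space \<nu>" using mu nu by (auto intro: rd_prob)
  have smu: "sets \<mu> = sets borel" by (rule real_distribution.events_eq_borel[OF mu])
  have snu: "sets \<nu> = sets borel" by (rule real_distribution.events_eq_borel[OF nu])
  have sg: "sets \<gamma>0 = sets (borel \<Otimes>\<^sub>M borel)"
    unfolding \<gamma>0_def by (rule sets_pair_measure_cong[OF smu snu])
  have m1: "distr \<gamma>0 borel fst = \<mu>"
  proof -
    have "distr \<gamma>0 borel fst = distr \<gamma>0 \<mu> fst" by (rule distr_cong) (use smu in auto)
    also have "\<dots> = \<mu>" unfolding \<gamma>0_def by (rule prob_space.distr_pair_fst[OF pnu])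
    finally show ?thesis .
  qed
  have m2: "distr \<gamma>0 borel snd = \<nu>"
  proof -
    have "distr \<gamma>0 borel snd = distr \<gamma>0 \<nu> snd" by (rule distr_cong) (use snu in auto)
    also have "\<dots> = \<nu>" unfolding \<gamma>0_def by (rule distr_pair_snd'[OF pmu pnu])
    finally show ?thesis .
  qed
  have cp0: "coupling \<gamma>0 \<mu> \<nu>"
    unfolding coupling_def using prob_space_pair[OF pmu pnu] sg m1 m2 unfolding \<gamma>0_def by auto
  have mfst: "fst \<in> \<gamma>0 \<rightarrow>\<^sub>M borel"
    by (subst measurable_cong_sets[OF sg refl]) simp
  have msnd: "snd \<in> \<gamma>0 \<rightarrow>\<^sub>M borel"
    by (subst measurable_cong_sets[OF sg refl]) simp
  have pm: "(\<lambda>x::real. \<bar>x\<bar> powr p) \<in> borel_measurable borel"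
    using borel_measurable_integrable[OF mum] measurable_cong_sets[OF smu refl] by simp
  have i1: "integrable \<gamma>0 (\<lambda>z. \<bar>fst z\<bar> powr p)"
    using integrable_distr_eq[OF mfst pm] mum m1 by simp
  have i2: "integrable \<gamma>0 (\<lambda>z. \<bar>snd z\<bar> powr p)"
    using integrable_distr_eq[OF msnd pm] num m2 by simp
  have ig0: "integrable \<gamma>0 (\<lambda>z. \<bar>fst z - snd z\<bar> powr p)"
  proof (rule Bochner_Integration.integrable_bound[where f = "\<lambda>z. 2 powr p * (\<bar>fst z\<bar> powr p + \<bar>snd z\<bar> powr p)"])
    show "integrable \<gamma>0 (\<lambda>z. 2 powr p * (\<bar>fst z\<bar> powr p + \<bar>snd z\<bar> powr p))"
      using i1 i2 by (intro integrable_mult_right Bochner_Integration.integrable_add)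
    have "(\<lambda>z. \<bar>fst z - snd z\<bar> powr p) \<in> borel_measurable (borel \<Otimes>\<^sub>M borel :: (real \<times> real) measure)"
      using pm by measurable
    then show "(\<lambda>z. \<bar>fst z - snd z\<bar> powr p) \<in> borel_measurable \<gamma>0"
      by (subst measurable_cong_sets[OF sg refl])
    show "AE z in \<gamma>0. norm (\<bar>fst z - snd z\<bar> powr p) \<le> norm (2 powr p * (\<bar>fst z\<bar> powr p + \<bar>snd z\<bar> powr p))"
      using powr_abs_diff_bound[OF p] by (intro AE_I2) simp
  qed
  define S where "S = {(\<integral>z. \<bar>fst z - snd z\<bar> powr p \<partial>\<gamma>) powr (1 / p) | \<gamma>.
       coupling \<gamma> \<mu> \<nu> \<and> integrable \<gamma> (\<lambda>z. \<bar>fst z - snd z\<bar> powr p)}"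
  have ne: "S \<noteq> {}" unfolding S_def using cp0 ig0 by blast
  have lb: "E powr (1/p) / real n \<le> x" if xS: "x \<in> S" for x
  proof -
    obtain \<gamma> where x: "x = (\<integral>z. \<bar>fst z - snd z\<bar> powr p \<partial>\<gamma>) powr (1 / p)"
      and cp: "coupling \<gamma> \<mu> \<nu>" and ig: "integrable \<gamma> (\<lambda>z. \<bar>fst z - snd z\<bar> powr p)"
      using xS unfolding S_def by blast
    have key: "E / real n powr p \<le> (\<integral>z. \<bar>fst z - snd z\<bar> powr p \<partial>\<gamma>)"
      unfolding E_def by (rule coupling_key[OF p cp ig n lat])
    have "(E / real n powr p) powr (1/p) \<le> (\<integral>z. \<bar>fst z - snd z\<bar> powr p \<partial>\<gamma>) powr (1/p)"
      using key E0 p by (intro powr_mono2) auto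
    moreover have "(E / real n powr p) powr (1/p) = E powr (1/p) / real n"
    proof -
      have "(real n powr p) powr (1/p) = real n" using p n by (simp add: powr_powr)
      then show ?thesis using E0 by (simp add: powr_divide)
    qed
    ultimately show ?thesis using x by simp
  qed
  show ?thesis unfolding wasserstein_def E_def[symmetric] S_def[symmetric]
    by (rule cInf_greatest[OF ne lb])
qed

lemma half_root: assumes p: "1 \<le> p" shows "((1/2::real) powr p) powr (1/p) = 1/2"
proof -
  have "((1/2::real) powr p) powr (1/p) = (1/2) powr (p * (1/p))" by (rule powr_powr)
  also have "p * (1/p) = 1" using p by simp
  finally show ?thesis by simp
qed

lemma neg_root: "((p::real) + 1) powr (- 1 / p) = 1 / (p + 1) powr (1/p)"
proof -
  have "- 1 / p = - (1/p)" by simp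
  then show ?thesis using powr_minus_divide[of "p + 1" "1/p"] by (simp only:)
qed

lemma HH_root: assumes p: "1 \<le> p" shows "HH p powr (1/p) = 1 / 2 * (p + 1) powr (- 1 / p)"
proof -
  have a: "HH p powr (1/p) = ((1/2) powr p) powr (1/p) / (p + 1) powr (1/p)"
    unfolding HH_def by (rule powr_divide)
  show ?thesis unfolding a half_root[OF p] neg_root by simp
qed

theorem proposition4p1:
  fixes p :: real and \<mu> :: "nat \<Rightarrow> real measure" and \<nu> :: "real measure"
    and b :: "nat \<Rightarrow> real"
  assumes p: "1 \<le> p"
    and W: "real_distribution \<nu>" "integrable \<nu> (\<lambda>x. \<bar>x\<bar> powr p)"
    and W_ac: "absolutely_continuous lborel \<nu>"
    and Wn: "\<And>n. n \<ge> 1 \<Longrightarrow> real_distribution (\<mu> n)"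
    and Wn_mom: "\<And>n. n \<ge> 1 \<Longrightarrow> integrable (\<mu> n) (\<lambda>x. \<bar>x\<bar> powr p)"
    and lattice: "\<And>n. n \<ge> 1 \<Longrightarrow> (AE x in \<mu> n. real n * (x - b n) \<in> \<int>)"
  shows "liminf (\<lambda>n. ereal (real n * wasserstein p (\<mu> n) \<nu>))
           \<ge> ereal (1 / 2 * (p + 1) powr (- 1 / p))"
proof -
  interpret N: prob_space \<nu> by (rule rd_prob[OF W(1)])
  have snu: "sets \<nu> = sets lborel" using real_distribution.events_eq_borel[OF W(1)] by simp
  obtain D where Dm: "D \<in> borel_measurable lborel" and DAE: "AE x in lborel. RN_deriv lborel \<nu> x = ennreal (D x)"
    and D0: "\<And>x. 0 \<le> D x"
    using sigma_finite_measure.real_RN_deriv[OF lborel.sigma_finite_measure_axioms N.finite_measure_axioms W_ac snu]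
    by metis
  have "\<nu> = density lborel (RN_deriv lborel \<nu>)"
    by (rule sigma_finite_measure.density_RN_deriv[OF lborel.sigma_finite_measure_axioms W_ac snu, symmetric])
  also have "\<dots> = density lborel (\<lambda>x. ennreal (D x))"
    by (rule density_cong[OF borel_measurable_RN_deriv _ DAE]) (use Dm in simp)
  finally have nu_eq: "\<nu> = density lborel (\<lambda>x. ennreal (D x))" .
  have intD: "integrable lborel D"
  proof -
    have "integrable \<nu> (\<lambda>_. 1::real)" by simp
    then have "integrable lborel (\<lambda>x. D x *\<^sub>R (1::real))"
      using integrable_density[OF borel_measurable_const Dm, of "1::real"] D0 nu_eq by simp
    then show ?thesis by simp
  qed
  have D1: "(\<integral>y. D y \<partial>lborel) = 1"
  proof -
    have "(\<integral>y. (1::real) \<partial>\<nu>) = 1" using N.prob_space by simp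
    moreover have "(\<integral>y. (1::real) \<partial>\<nu>) = (\<integral>y. D y *\<^sub>R 1 \<partial>lborel)"
      using integral_density[OF borel_measurable_const Dm, of "1::real"] D0 nu_eq by simp
    ultimately show ?thesis by simp
  qed
  define E where "E n = (\<integral>y. gp p (real n * y - real n * b n) \<partial>\<nu>)" for n
  have E_eq: "E n = (\<integral>y. gp p (real n * y - real n * b n) * D y \<partial>lborel)" for n
  proof -
    have hm: "(\<lambda>y. gp p (real n * y - real n * b n)) \<in> borel_measurable lborel"
      using gp_meas[OF p, of "real n" "- (real n * b n)"] by simp
    have "E n = (\<integral>y. D y *\<^sub>R gp p (real n * y - real n * b n) \<partial>lborel)"
      unfolding E_def using integral_density[OF hm Dm] D0 nu_eq by simp
    then show ?thesis by (simp add: mult.commute)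
  qed
  have Eev: "eventually (\<lambda>n. HH p - e < E n) sequentially" if e: "0 < e" for e
    using E_eventually[OF p intD D0 D1 e, of "\<lambda>n. real n * b n"] unfolding E_eq .
  have Wlow: "E n powr (1/p) \<le> real n * wasserstein p (\<mu> n) \<nu>" if n: "1 \<le> n" for n
  proof -
    have "E n powr (1/p) / real n \<le> wasserstein p (\<mu> n) \<nu>"
      unfolding E_def using n
      by (intro wass_lower[OF p Wn[OF n] W(1) Wn_mom[OF n] W(2)] lattice) auto
    then show ?thesis using n by (simp add: divide_le_eq mult.commute)
  qed
  define C where "C = HH p powr (1/p)"
  have HHpos: "0 < HH p" unfolding HH_def using p by simp
  have Cpos: "0 < C" unfolding C_def using HHpos by simp
  have CpHH: "C powr p = HH p" unfolding C_def using p HHpos by (simp add: powr_powr)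
  have Ceq: "C = 1 / 2 * (p + 1) powr (- 1 / p)" unfolding C_def by (rule HH_root[OF p])
  have "ereal C \<le> liminf (\<lambda>n. ereal (real n * wasserstein p (\<mu> n) \<nu>))"
    unfolding le_Liminf_iff
  proof (intro allI impI)
    fix y :: ereal assume y: "y < ereal C"
    show "eventually (\<lambda>n. y < ereal (real n * wasserstein p (\<mu> n) \<nu>)) sequentially"
    proof (cases y)
      case MInf then show ?thesis by simp
    next
      case PInf then show ?thesis using y by simp
    next
      case (real r)
      then have rC: "r < C" using y by simp
      define r' where "r' = (max r 0 + C) / 2"
      have r'0: "0 < r'" and rr': "r < r'" and r'C: "r' < C" unfolding r'_def using rC Cpos by auto
      have "r' powr p < C powr p" using r'0 r'C p by (intro powr_less_mono2) auto
      then have e: "0 < HH p - r' powr p" using CpHH by simp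
      have ev: "eventually (\<lambda>n. HH p - (HH p - r' powr p) < E n \<and> 1 \<le> n) sequentially"
        using Eev[OF e] eventually_ge_at_top[of 1] by (rule eventually_conj)
      show ?thesis using ev
      proof eventually_elim
        case (elim n)
        then have En: "r' powr p < E n" and n: "1 \<le> n" by auto
        have "r' = (r' powr p) powr (1/p)" using r'0 p by (simp add: powr_powr)
        also have "\<dots> < E n powr (1/p)" using En p by (intro powr_less_mono2) auto
        also have "\<dots> \<le> real n * wasserstein p (\<mu> n) \<nu>" by (rule Wlow[OF n])
        finally show ?case using real rr' by simp
      qed
    qed
  qed
  then show ?thesis unfolding Ceq .
qed

end
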